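(* Let $\mathbf x=(x_n)_{n\ge0}$ be a sequence over a finite alphabet $\mathcal A$, let $\mathcal A'$ be a proper subset of $\mathcal A$, and suppose there is a sequence $\mathbf y=(y_n)_{n\ge 0}$ over $\mathcal A'$ such that every prefix of $\mathbf y$ is a factor of $\mathbf x$. Let $d\ge 2$. If no sequence in the orbit closure of $\mathbf y$ under the shift is $d$-automatic, then $\mathbf x$ is not $d$-automatic.
   Context: The shift $S$ maps $(z_n)_{n\ge0}$ to $(z_{n+1})_{n\ge 0}$; the orbit closure of $\mathbf y$ is the closure of $\{S^n\mathbf y:n\ge0\}$ in the product topology. A factor of $\mathbf x$ is a finite block $x_ix_{i+1}\cdots x_j$. For $d\ge 2$, a sequence is $d$-automatic if it is the letter-to-letter image of a fixed point of a morphism all of whose letter-images have length $d$. *)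

theory Defs
  imports "HOL-Analysis.Analysis"
begin

definition shift :: "(nat \<Rightarrow> 'a) \<Rightarrow> nat \<Rightarrow> 'a" where
  "shift z = (\<lambda>n. z (Suc n))"

definition orbit_closure :: "(nat \<Rightarrow> 'a) \<Rightarrow> (nat \<Rightarrow> 'a) set" where
  "orbit_closure y =
     (product_topology (\<lambda>_::nat. discrete_topology (UNIV::'a set)) UNIV)
       closure_of {(shift ^^ n) y | n. True}"

definition prefixes_are_factors :: "(nat \<Rightarrow> 'a) \<Rightarrow> (nat \<Rightarrow> 'a) \<Rightarrow> bool" where
  "prefixes_are_factors y x \<longleftrightarrow> (\<forall>m. \<exists>i. \<forall>k<m. x (i + k) = y k)"

text \<open>d-automatic: letter-to-letter image (coding tau) of a fixed point u of a d-uniform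
  morphism sigma on a finite alphabet B (represented inside nat).  The fixed point equation
  sigma(u) = u for a d-uniform morphism is u(d*n+j) = (sigma (u n))!j for j<d.\<close>
definition d_automatic :: "nat \<Rightarrow> (nat \<Rightarrow> 'a) \<Rightarrow> bool" where
  "d_automatic d x \<longleftrightarrow>
     (\<exists>(B::nat set) (\<sigma>::nat \<Rightarrow> nat list) (\<tau>::nat \<Rightarrow> 'a) (u::nat \<Rightarrow> nat).
        finite B \<and>
        (\<forall>b\<in>B. length (\<sigma> b) = d \<and> set (\<sigma> b) \<subseteq> B) \<and>
        (\<forall>n. u n \<in> B) \<and>
        (\<forall>n j. j < d \<longrightarrow> u (d * n + j) = \<sigma> (u n) ! j) \<and>
        (\<forall>n. x n = \<tau> (u n)))"

end

theory Submission
  imports Defs "HOL-Library.Countable"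
begin

fun Phi :: "(nat \<Rightarrow> nat list) \<Rightarrow> nat \<Rightarrow> nat \<Rightarrow> nat \<Rightarrow> nat \<Rightarrow> nat" where
  "Phi sg d 0 b r = b"
| "Phi sg d (Suc k) b r = sg (Phi sg d k b (r div d)) ! (r mod d)"

lemma shift_pow: "(shift ^^ n) y s = y (n + s)"
  by (induction n arbitrary: s) (auto simp: shift_def)

lemma orbit_closureI:
  assumes "\<forall>m. \<exists>e. \<forall>s<m. z s = y (e + s)"
  shows "z \<in> orbit_closure y"
  unfolding orbit_closure_def in_closure_of
proof (intro conjI allI impI)
  show "z \<in> topspace (product_topology (\<lambda>_. discrete_topology UNIV) UNIV)"
    by simp
  fix T assume T: "z \<in> T \<and> openin (product_topology (\<lambda>_::nat. discrete_topology (UNIV::'a set)) UNIV) T"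
  then obtain U where U: "finite {i. U i \<noteq> UNIV}" "z \<in> Pi\<^sub>E UNIV U" "Pi\<^sub>E UNIV U \<subseteq> T"
    unfolding openin_product_topology_alt by force
  obtain m where m: "{i. U i \<noteq> UNIV} \<subseteq> {..<m}" using finite_nat_bounded[OF U(1)] by blast
  obtain e where e: "\<forall>s<m. z s = y (e + s)" using assms by blast
  have "(shift ^^ e) y \<in> Pi\<^sub>E UNIV U"
  proof -
    have "(shift ^^ e) y i \<in> U i" for i
    proof (cases "U i = UNIV")
      case False
      then have "i < m" using m by auto
      then have "z i = y (e+i)" using e by auto
      moreover have "z i \<in> U i" using U(2) by (auto simp: PiE_UNIV_domain)
      ultimately show ?thesis by (simp add: shift_pow)
    qed simp
    then show ?thesis by (simp add: PiE_UNIV_domain)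
  qed
  then show "\<exists>y'. y' \<in> {(shift ^^ n) y |n. True} \<and> y' \<in> T" using U(3) by blast
qed

lemma freq_pigeon:
  assumes "finite F" "\<forall>m::nat. \<exists>k\<ge>m. \<exists>v\<in>F. Q k v"
  shows "\<exists>v\<in>F. \<forall>m. \<exists>k\<ge>m. Q k v"
proof (rule ccontr)
  assume "\<not> ?thesis"
  then have "\<forall>v\<in>F. \<exists>m. \<forall>k\<ge>m. \<not> Q k v" by (metis not_le)
  then obtain M where M: "\<forall>v\<in>F. \<forall>k\<ge>M v. \<not> Q k v" by metis
  define N where "N = (\<Sum>v\<in>F. M v)"
  have "\<forall>v\<in>F. M v \<le> N" unfolding N_def using assms(1) by (simp add: member_le_sum)
  moreover obtain k v where "k \<ge> N" "v \<in> F" "Q k v" using assms(2) by blast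
  ultimately show False using M by force
qed


lemma Phi_top:
  assumes "0 < d"
  shows "Phi sg d (k+m) b r = Phi sg d k (Phi sg d m b (r div d^k)) (r mod d^k)"
proof (induction k arbitrary: r)
  case 0 then show ?case by simp
next
  case (Suc k)
  have e1: "r div d div d^k = r div d^(Suc k)"
    by (simp add: div_mult2_eq mult.commute)
  have e2: "r div d mod d^k = r mod d^(Suc k) div d"
    using assms by (simp add: mod_mult2_eq div_mult2_eq mult.commute)
  have e3: "r mod d^(Suc k) mod d = r mod d"
    by (simp add: mod_mod_cancel)
  show ?case using Suc e1 e2 e3 by simp
qed

lemma Phi_0: "Phi sg d m b 0 = ((\<lambda>b. sg b ! 0)^^m) b"
  by (induction m) auto

lemma Phi_B:
  assumes "\<forall>b\<in>B. length (sg b) = d \<and> set (sg b) \<subseteq> B" "0 < d" "b \<in> B"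
  shows "Phi sg d k b r \<in> B"
  using assms
proof (induction k arbitrary: r)
  case (Suc k)
  have "Phi sg d k b (r div d) \<in> B" using Suc by blast
  moreover have "r mod d < d" using assms(2) by simp
  ultimately show ?case using assms(1) by (auto simp: subset_iff)
qed simp

lemma Phi_block:
  assumes "\<forall>n j. j < d \<longrightarrow> u (d*n+j) = sg (u n) ! j" "0 < d"
  shows "r < d^k \<Longrightarrow> u (d^k*n + r) = Phi sg d k (u n) r"
proof (induction k arbitrary: r)
  case 0 then show ?case by simp
next
  case (Suc k)
  have q: "r div d < d^k" using Suc.prems assms(2)
    by (simp add: div_less_iff_less_mult mult.commute)
  have "d^(Suc k)*n + r = d * (d^k*n + r div d) + r mod d"
    by (simp add: algebra_simps)
  then have "u (d^(Suc k)*n + r) = sg (u (d^k*n + r div d)) ! (r mod d)"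
    using assms by simp
  then show ?case using Suc.IH[OF q] by simp
qed

lemma stab:
  assumes "((\<lambda>b. sg b ! 0)^^p) c = c" "0 < d" "s < d^L"
  shows "Phi sg d (L + p*t) c s = Phi sg d L c s"
proof (induction t)
  case 0 then show ?case by simp
next
  case (Suc t)
  have "s < d^(L+p*t)" using assms(2,3)
  proof -
    have "d^L \<le> d^(L+p*t)" using assms(2) by (intro power_increasing) auto
    then show ?thesis using assms(3) by linarith
  qed
  then have "Phi sg d ((L + p*t) + p) c s = Phi sg d (L+p*t) (Phi sg d p c 0) s"
    using Phi_top[OF assms(2), of sg "L+p*t" p c s] by simp
  moreover have "L + p * Suc t = (L + p*t) + p" by simp
  ultimately show ?case using Suc assms(1) by (simp only: Phi_0)
qed

lemma stab2:
  assumes "((\<lambda>b. sg b ! 0)^^p) c = c" "0 < d" "L1 mod p = L2 mod p" "s < d^(min L1 L2)"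
  shows "Phi sg d L1 c s = Phi sg d L2 c s"
proof -
  have *: "Phi sg d L1 c s = Phi sg d L2 c s" if "L1 \<le> L2" "L1 mod p = L2 mod p" "s < d^L1" for L1 L2
  proof -
    have "L2 = L1 + p * ((L2 - L1) div p)"
      using that by (metis add_diff_inverse_nat le_diff_conv2 less_le_not_le mod_eq_dvd_iff_nat dvd_mult_div_cancel)
    then show ?thesis using stab[OF assms(1,2) that(3), of "(L2 - L1) div p"] by simp
  qed
  show ?thesis
  proof (cases "L1 \<le> L2")
    case True then show ?thesis using * assms by (simp add: min_def)
  next
    case False then show ?thesis using *[of L2 L1] assms by (simp add: min_def)
  qed
qed


lemma lt_pow: "2 \<le> d \<Longrightarrow> n \<le> L \<Longrightarrow> n < (d::nat)^L"
proof -
  assume a: "2 \<le> d" "n \<le> L"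
  have "L < 2^L" by simp
  also have "(2::nat)^L \<le> d^L" using a by (simp add: power_mono)
  finally show ?thesis using a by linarith
qed

lemma auto_from_cycle:
  assumes fB: "finite B" and sB: "\<forall>b\<in>B. length (sg b) = d \<and> set (sg b) \<subseteq> B"
    and d2: "2 \<le> d" and cB: "c \<in> B" and p0: "0 < p"
    and cyc: "((\<lambda>b. sg b ! 0)^^p) c = c"
  shows "d_automatic d (\<lambda>s. \<tau> (Phi sg d (p*(s+1)) c s))"
proof -
  have d0: "0 < d" using d2 by simp
  define V where "V i s = Phi sg d (p*(s+1)+i) c s" for i s
  define U where "U n = map (\<lambda>i. V i n) [0..<p]" for n
  define sg' where "sg' L = map (\<lambda>j. map (\<lambda>i. sg (L ! ((i + p - 1) mod p)) ! j) [0..<p]) [0..<d]" for L :: "nat list"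
  define B' where "B' = (to_nat :: nat list \<Rightarrow> nat) ` {L. set L \<subseteq> B \<and> length L = p}"
  define sg'' where "sg'' m = map to_nat (sg' (from_nat m))" for m
  define tau' where "tau' m = \<tau> ((from_nat m :: nat list) ! 0)" for m
  define u' where "u' n = to_nat (U n)" for n
  have VB: "V i s \<in> B" for i s unfolding V_def using Phi_B[OF sB d0 cB] by blast
  have Vrec: "V i (d*n+j) = sg (V ((i + p - 1) mod p) n) ! j" if "i < p" "j < d" for i n j
  proof -
    define s' where "s' = d*n+j"
    define L where "L = p*(s'+1)+i"
    have L1: "L = Suc (L - 1)" unfolding L_def using p0 by simp
    have "V i s' = Phi sg d (Suc (L-1)) c s'" unfolding V_def L_def[symmetric] by (subst L1, rule refl)
    also have "\<dots> = sg (Phi sg d (L-1) c n) ! j"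
      using that d0 by (simp add: s'_def)
    also have "Phi sg d (L-1) c n = V ((i + p - 1) mod p) n"
      unfolding V_def
    proof (rule stab2[OF cyc d0])
      have r: "(p * (n + 1) + (i + p - 1) mod p) mod p = (i + p - 1) mod p"
      proof -
        have "(p * (n + 1) + (i + p - 1) mod p) mod p = ((i + p - 1) mod p + p * (n + 1)) mod p"
          by (simp only: add.commute)
        also have "\<dots> = (i + p - 1) mod p mod p" by (rule mod_mult_self2)
        finally show ?thesis by simp
      qed
      have "(L - 1) mod p = (i + p - 1) mod p"
      proof (cases "i = 0")
        case True
        have pp: "p * (s'+1) = p * s' + p" by (simp only: distrib_left mult_1_right)
        have h1: "L - 1 = (p - 1) + p * s'" unfolding L_def using p0 True pp by linarith
        have "((p - 1) + p * s') mod p = (p - 1) mod p" by (rule mod_mult_self2)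
        also have "\<dots> = p - 1" using p0 by simp
        also have "\<dots> = (i + p - 1) mod p" using True p0 by simp
        finally show ?thesis using h1 by simp
      next
        case False
        have h1: "L - 1 = (i - 1) + p * (s'+1)" unfolding L_def using False by linarith
        have m1: "((i - 1) + p * (s'+1)) mod p = (i - 1) mod p" by (rule mod_mult_self2)
        have m2: "(i - 1) mod p = i - 1" using that(1) by simp
        have m4: "i + p - 1 = (i - 1) + p" using False by simp
        have m5: "(i + p - 1) mod p = i - 1" unfolding m4 using m2 by simp
        show ?thesis using h1 m1 m2 m5 by simp
      qed
      then show "(L - 1) mod p = (p * (n + 1) + (i + p - 1) mod p) mod p" using r by simp
      have k1: "s' + 1 \<le> p * (s' + 1)" using mult_le_mono1[of 1 p "s'+1"] p0 by (simp only: mult_1)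
      have k2: "n + 1 \<le> p * (n + 1)" using mult_le_mono1[of 1 p "n+1"] p0 by (simp only: mult_1)
      have k3: "n \<le> d * n" using d0 by simp
      have k4: "n \<le> L - 1" unfolding L_def using k1 k3 unfolding s'_def by linarith
      have k5: "n \<le> min (L - 1) (p * (n + 1) + (i + p - 1) mod p)" using k4 k2 by linarith
      show "n < d ^ min (L - 1) (p * (n + 1) + (i + p - 1) mod p)"
        by (rule lt_pow[OF d2 k5])
    qed
    finally show ?thesis unfolding s'_def .
  qed
  have Urec: "U (d*n+j) = sg' (U n) ! j" if "j < d" for n j
  proof -
    have e: "sg' (U n) ! j = map (\<lambda>i. sg (U n ! ((i + p - 1) mod p)) ! j) [0..<p]"
      unfolding sg'_def using that by simp
    show ?thesis unfolding e
    proof (rule nth_equalityI)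
      show "length (U (d*n+j)) = length (map (\<lambda>i. sg (U n ! ((i + p - 1) mod p)) ! j) [0..<p])"
        by (simp add: U_def)
      fix i assume "i < length (U (d*n+j))"
      then have i: "i < p" by (simp add: U_def)
      have "(i + p - 1) mod p < p" using p0 by simp
      then have "U n ! ((i + p - 1) mod p) = V ((i + p - 1) mod p) n" by (simp add: U_def)
      then show "U (d*n+j) ! i = map (\<lambda>i. sg (U n ! ((i + p - 1) mod p)) ! j) [0..<p] ! i"
        using i Vrec[OF i that] by (simp add: U_def)
    qed
  qed
  show ?thesis unfolding d_automatic_def
    apply (rule exI[of _ B'], rule exI[of _ sg''], rule exI[of _ tau'], rule exI[of _ u'])
  proof (intro conjI)
    show "finite B'" unfolding B'_def using fB finite_lists_length_eq[OF fB] by blast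
    show "\<forall>b\<in>B'. length (sg'' b) = d \<and> set (sg'' b) \<subseteq> B'"
    proof
      fix b assume "b \<in> B'"
      then obtain L where L: "b = to_nat L" "set L \<subseteq> B" "length L = p" unfolding B'_def by blast
      have "set (sg' L) \<subseteq> {L. set L \<subseteq> B \<and> length L = p}"
      proof
        fix M assume "M \<in> set (sg' L)"
        then obtain j where j: "j < d" "M = map (\<lambda>i. sg (L ! ((i + p - 1) mod p)) ! j) [0..<p]"
          unfolding sg'_def by auto
        have "sg (L ! ((i + p - 1) mod p)) ! j \<in> B" for i
        proof -
          have "L ! ((i + p - 1) mod p) \<in> B" using L p0 by (metis mod_less_divisor nth_mem subsetD)
          then show ?thesis using sB j(1) by (metis nth_mem subsetD)
        qed
        then show "M \<in> {L. set L \<subseteq> B \<and> length L = p}" using j by auto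
      qed
      then have "to_nat ` set (sg' L) \<subseteq> B'" unfolding B'_def by (rule image_mono)
      moreover have "set (sg'' b) = to_nat ` set (sg' L)" using L(1) by (simp add: sg''_def)
      moreover have "length (sg'' b) = d" by (simp add: sg''_def sg'_def)
      ultimately show "length (sg'' b) = d \<and> set (sg'' b) \<subseteq> B'" by simp
    qed
    show "\<forall>n. u' n \<in> B'"
    proof
      fix n
      have "U n \<in> {L. set L \<subseteq> B \<and> length L = p}" unfolding U_def using VB by auto
      then show "u' n \<in> B'" unfolding u'_def B'_def by (rule imageI)
    qed
    show "\<forall>n j. j < d \<longrightarrow> u' (d * n + j) = sg'' (u' n) ! j"
    proof (intro allI impI)
      fix n j assume j: "j < d"
      have l: "length (sg' (U n)) = d" by (simp add: sg'_def)
      have "u' (d*n+j) = to_nat (U (d*n+j))" by (simp only: u'_def)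
      also have "\<dots> = to_nat (sg' (U n) ! j)" using Urec[OF j, of n] by (rule arg_cong)
      also have "\<dots> = (map to_nat (sg' (U n))) ! j" using j l by (simp only: nth_map)
      also have "\<dots> = sg'' (u' n) ! j" by (simp only: sg''_def u'_def from_nat_to_nat)
      finally show "u' (d * n + j) = sg'' (u' n) ! j" .
    qed
    show "\<forall>n. \<tau> (Phi sg d (p * (n + 1)) c n) = tau' (u' n)"
    proof
      fix n
      have "tau' (u' n) = \<tau> (U n ! 0)" by (simp only: tau'_def u'_def from_nat_to_nat)
      also have "U n ! 0 = V 0 n" using p0 by (simp add: U_def)
      also have "V 0 n = Phi sg d (p * (n + 1)) c n" by (simp only: V_def add_0_right)
      finally show "\<tau> (Phi sg d (p * (n + 1)) c n) = tau' (u' n)" by simp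
    qed
  qed
qed


theorem mainTheorem13:
  fixes x y :: "nat \<Rightarrow> 'a" and A A' :: "'a set" and d :: nat
  assumes "finite A"
    and "\<forall>n. x n \<in> A"
    and "A' \<subset> A"
    and "\<forall>n. y n \<in> A'"
    and "prefixes_are_factors y x"
    and "d \<ge> 2"
    and "\<forall>z\<in>orbit_closure y. \<not> d_automatic d z"
  shows "\<not> d_automatic d x"
proof
  assume "d_automatic d x"
  then obtain B :: "nat set" and \<sigma> :: "nat \<Rightarrow> nat list" and \<tau> :: "nat \<Rightarrow> 'a" and u :: "nat \<Rightarrow> nat" where fB: "finite B"
    and sB: "\<forall>b\<in>B. length (\<sigma> b) = d \<and> set (\<sigma> b) \<subseteq> B"
    and uB: "\<forall>n. u n \<in> B"
    and fixp: "\<forall>n j. j < d \<longrightarrow> u (d * n + j) = \<sigma> (u n) ! j"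
    and xt: "\<forall>n. x n = \<tau> (u n)"
    unfolding d_automatic_def by (elim exE conjE) (erule that; assumption)
  have d2: "2 \<le> d" using assms(6) .
  have d0: "0 < d" using d2 by simp
  define f where "f b = \<sigma> b ! 0" for b
  have f_eq: "f = (\<lambda>b. \<sigma> b ! 0)" by (rule ext) (simp add: f_def)
  have fB1: "f b \<in> B" if "b \<in> B" for b
  proof -
    have "\<sigma> b ! 0 \<in> set (\<sigma> b)" using sB that d0 by (intro nth_mem) simp
    then show ?thesis using sB that unfolding f_def by blast
  qed
  have fpB: "(f^^j) b \<in> B" if "b \<in> B" for b j
    using that by (induction j) (auto intro: fB1)
  define Q where "Q k b = (\<exists>e. \<forall>s<d^k. y (e+s) = \<tau> (Phi \<sigma> d k b s))" for k b
  have S1: "\<exists>b\<in>B. Q k b" for k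
  proof -
    define D where "D = d^k"
    have D0: "0 < D" unfolding D_def using d0 by simp
    obtain i where i: "\<forall>t<2*D. x (i + t) = y t"
      using assms(5) unfolding prefixes_are_factors_def by metis
    define n where "n = i div D"
    define r where "r = i mod D"
    have ir: "i = D*n + r" unfolding n_def r_def by simp
    have rD: "r < D" unfolding r_def using D0 by simp
    have "\<forall>s<d^k. y ((D - r) + s) = \<tau> (Phi \<sigma> d k (u (n+1)) s)"
    proof (intro allI impI)
      fix s assume s: "s < d^k"
      have "D - r + s < 2*D" using s rD unfolding D_def by linarith
      then have "y (D - r + s) = x (i + (D - r + s))" using i by simp
      also have "i + (D - r + s) = D*(n+1) + s" using ir rD by (simp add: algebra_simps)
      also have "x (D*(n+1) + s) = \<tau> (u (d^k*(n+1) + s))" using xt unfolding D_def by simp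
      also have "u (d^k*(n+1) + s) = Phi \<sigma> d k (u (n+1)) s"
        by (rule Phi_block[OF fixp d0 s])
      finally show "y (D - r + s) = \<tau> (Phi \<sigma> d k (u (n+1)) s)" .
    qed
    then show ?thesis using uB unfolding Q_def by blast
  qed
  obtain b where bB: "b \<in> B" and bQ: "\<forall>m. \<exists>k\<ge>m. Q k b"
    using freq_pigeon[OF fB, of Q] S1 by blast
  obtain j0 p where p0: "0 < p" and per: "(f^^(j0+p)) b = (f^^j0) b"
  proof -
    have "\<not> inj_on (\<lambda>j. (f^^j) b) {..card B}"
    proof
      assume "inj_on (\<lambda>j. (f^^j) b) {..card B}"
      moreover have "(\<lambda>j. (f^^j) b) ` {..card B} \<subseteq> B" using fpB bB by auto
      ultimately have "card {..card B} \<le> card B" using card_inj_on_le fB by blast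
      then show False by simp
    qed
    then obtain i j where ij: "i \<noteq> j" "(f^^i) b = (f^^j) b" unfolding inj_on_def by blast
    show ?thesis
    proof (cases "i < j")
      case True
      then show ?thesis using that[of "j - i" i] ij by simp
    next
      case False
      then show ?thesis using that[of "i - j" j] ij by simp
    qed
  qed
  have "\<forall>m. \<exists>k\<ge>m. \<exists>\<rho>\<in>{..<p}. Q k b \<and> k mod p = \<rho>"
    using bQ p0 by fastforce
  then obtain \<rho> where \<rho>: "\<rho> < p" and kQ: "\<forall>m. \<exists>k\<ge>m. Q k b \<and> k mod p = \<rho>"
    using freq_pigeon[of "{..<p}" "\<lambda>k \<rho>. Q k b \<and> k mod p = \<rho>"] by blast
  define J where "J = j0*p + \<rho>"
  define c where "c = (f^^J) b"
  have cB: "c \<in> B" unfolding c_def using fpB bB by simp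
  have "j0 * 1 \<le> j0 * p" using p0 by (intro mult_le_mono2) simp
  then have Jge: "j0 \<le> J" unfolding J_def by linarith
  have cyc: "(f^^p) c = c"
  proof -
    have e: "p + J = (J - j0) + (j0 + p)" using Jge by simp
    have "(f^^p) c = (f^^(p + J)) b" unfolding c_def by (simp only: funpow_add o_apply)
    also have "\<dots> = (f^^((J - j0) + (j0 + p))) b" by (simp only: e)
    also have "\<dots> = (f^^(J - j0)) ((f^^(j0 + p)) b)" by (simp only: funpow_add o_apply)
    also have "\<dots> = (f^^(J - j0)) ((f^^j0) b)" using per by simp
    also have "\<dots> = (f^^((J - j0) + j0)) b" by (simp only: funpow_add o_apply)
    also have "(J - j0) + j0 = J" using Jge by simp
    finally show ?thesis unfolding c_def .
  qed
  have cyc': "((\<lambda>b. \<sigma> b ! 0)^^p) c = c" using cyc unfolding f_eq .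
  define z where "z s = \<tau> (Phi \<sigma> d (p*(s+1)) c s)" for s
  have "z \<in> orbit_closure y"
  proof (rule orbit_closureI, intro allI)
    fix m
    obtain k where k: "k \<ge> J + p*m" "Q k b" "k mod p = \<rho>" using kQ by blast
    obtain e where e: "\<forall>s<d^k. y (e+s) = \<tau> (Phi \<sigma> d k b s)" using k(2) unfolding Q_def by blast
    have "p dvd (k - J)"
    proof -
      have "J mod p = \<rho>" unfolding J_def using \<rho> by simp
      then have "k mod p = J mod p" using k(3) by simp
      then show ?thesis using k(1) by (simp add: mod_eq_dvd_iff_nat)
    qed
    then obtain K where K: "k - J = p*K" by blast
    have kK: "k = p*K + J" using K k(1) by linarith
    have "p*m \<le> p*K" using k(1) K by linarith
    then have Km: "m \<le> K" using p0 by simp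
    have KpK: "K \<le> p*K" using p0 by simp
    have "\<forall>s<m. z s = y (e+s)"
    proof (intro allI impI)
      fix s assume s: "s < m"
      have s1: "s < d^k" using lt_pow[OF d2, of s k] s Km KpK kK by linarith
      have s2: "s < d^(p*K)" using lt_pow[OF d2, of s "p*K"] s Km KpK by linarith
      have "Phi \<sigma> d k b s = Phi \<sigma> d (p*K) (Phi \<sigma> d J b (s div d^(p*K))) (s mod d^(p*K))"
        unfolding kK by (rule Phi_top[OF d0])
      also have "\<dots> = Phi \<sigma> d (p*K) c s"
        using s2 by (simp add: Phi_0 c_def f_eq)
      also have "\<dots> = Phi \<sigma> d (p*(s+1)) c s"
      proof (rule stab2[OF cyc' d0])
        show "p * K mod p = p * (s + 1) mod p" by simp
        have "s \<le> p*(s+1)" using mult_le_mono1[of 1 p "s+1"] p0 by simp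
        then have "s \<le> min (p*K) (p*(s+1))" using s Km KpK by linarith
        then show "s < d ^ min (p * K) (p * (s + 1))" by (rule lt_pow[OF d2])
      qed
      finally show "z s = y (e+s)" using e s1 unfolding z_def by simp
    qed
    then show "\<exists>e. \<forall>s<m. z s = y (e + s)" by blast
  qed
  moreover have "d_automatic d z"
    unfolding z_def by (rule auto_from_cycle[OF fB sB d2 cB p0 cyc'])
  ultimately show False using assms(7) by blast
qed

end
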